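(* Let $G$ be a bipartite graph with bipartition $(X,Y)$ such that $|X|=|Y|=m\ge1$, and suppose there is a numbering $f$ of $G$ with $f(X)=[1,m]$. Then there is a numbering $F$ of $G\times K_2$ such that $F^{-1}([1,2m])=\widetilde X$ for one part $\widetilde X$ of a bipartition $(\widetilde X,\widetilde Y)$ of $G\times K_2$, and $str_F(G\times K_2)=5m+1$.
   Context: $G\times K_2$ denotes the Cartesian product of $G$ with the complete graph $K_2$. For a graph $G$ of order $p$, a numbering is a bijection $f:V(G)\to[1,p]$, where $[a,b]$ is the set of integers from $a$ to $b$; $str_f(G)=\max\{f(u)+f(v): uv\in E(G)\}$. *)

theory Defs
  imports Main
begin

definition simple_graph :: "'a set \<Rightarrow> 'a set set \<Rightarrow> bool" where
  "simple_graph V E \<longleftrightarrow> finite V \<and>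
     (\<forall>e\<in>E. \<exists>u v. e = {u, v} \<and> u \<noteq> v \<and> u \<in> V \<and> v \<in> V)"

definition bipartition :: "'a set \<Rightarrow> 'a set set \<Rightarrow> 'a set \<Rightarrow> 'a set \<Rightarrow> bool" where
  "bipartition V E X Y \<longleftrightarrow> X \<union> Y = V \<and> X \<inter> Y = {} \<and>
     (\<forall>e\<in>E. \<exists>x\<in>X. \<exists>y\<in>Y. e = {x, y})"

definition numbering :: "'a set \<Rightarrow> ('a \<Rightarrow> nat) \<Rightarrow> bool" where
  "numbering V f \<longleftrightarrow> bij_betw f V {1..card V}"

definition strength :: "'a set set \<Rightarrow> ('a \<Rightarrow> nat) \<Rightarrow> nat" where
  "strength E f = Max {f u + f v | u v. {u, v} \<in> E}"

text \<open>Cartesian product G x K_2, the two copies indexed by False/True.\<close>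
definition prodK2_verts :: "'a set \<Rightarrow> ('a \<times> bool) set" where
  "prodK2_verts V = V \<times> (UNIV :: bool set)"

definition prodK2_edges :: "'a set \<Rightarrow> 'a set set \<Rightarrow> ('a \<times> bool) set set" where
  "prodK2_edges V E =
     {{(u, b), (v, b)} | u v b. {u, v} \<in> E} \<union> {{(v, False), (v, True)} | v. v \<in> V}"

end

theory Submission
  imports Defs
begin

lemma dsum: "{p, q} = {r, s} \<Longrightarrow> (g::'b \<Rightarrow> nat) p + g q = g r + g s"
  by (auto simp: doubleton_eq_iff)

theorem mainTheorem14:
  fixes V :: "'a set" and E :: "'a set set" and X Y :: "'a set"
    and f :: "'a \<Rightarrow> nat" and m :: nat
  assumes "simple_graph V E"
    and "bipartition V E X Y"
    and "card X = m" and "card Y = m" and "m \<ge> 1"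
    and "numbering V f" and "f ` X = {1..m}"
  shows "\<exists>F Xt Yt. numbering (prodK2_verts V) F
           \<and> bipartition (prodK2_verts V) (prodK2_edges V E) Xt Yt
           \<and> {w \<in> prodK2_verts V. F w \<in> {1..2*m}} = Xt
           \<and> strength (prodK2_edges V E) F = 5*m + 1"
proof -
  have finV: "finite V" using assms(1) by (simp add: simple_graph_def)
  have V: "V = X \<union> Y" and disj: "X \<inter> Y = {}"
    and edG: "\<forall>e\<in>E. \<exists>x\<in>X. \<exists>y\<in>Y. e = {x, y}"
    using assms(2) by (auto simp: bipartition_def)
  have finX: "finite X" and finY: "finite Y" using finV V by auto
  have cV: "card V = 2*m" using V disj finX finY assms(3,4) card_Un_disjoint by force
  have bij: "bij_betw f V {1..2*m}" using assms(6) cV by (simp add: numbering_def)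
  have inj: "inj_on f V" and imV: "f ` V = {1..2*m}" using bij by (auto simp: bij_betw_def)
  have hX: "\<And>x. x \<in> X \<Longrightarrow> 1 \<le> f x \<and> f x \<le> m" using assms(7) by auto
  have hY: "\<And>y. y \<in> Y \<Longrightarrow> m + 1 \<le> f y \<and> f y \<le> 2*m"
  proof -
    fix y assume y: "y \<in> Y"
    then have yV: "y \<in> V" using V by auto
    have "f y \<in> {1..2*m}" using imV yV by auto
    moreover have "f y \<notin> f ` X"
    proof
      assume "f y \<in> f ` X"
      then obtain x where "x \<in> X" "f y = f x" by auto
      then have "y = x" using inj yV V by (auto dest: inj_onD)
      then show False using \<open>x \<in> X\<close> y disj by auto
    qed
    ultimately show "m + 1 \<le> f y \<and> f y \<le> 2*m" using assms(7) by auto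
  qed
  have imY: "\<And>k. m + 1 \<le> k \<Longrightarrow> k \<le> 2*m \<Longrightarrow> \<exists>y\<in>Y. f y = k"
  proof -
    fix k assume k: "m + 1 \<le> k" "k \<le> 2*m"
    then have "k \<in> f ` V" using imV by auto
    then obtain v where v: "v \<in> V" "f v = k" by auto
    have "v \<notin> X" using hX v k by force
    then show "\<exists>y\<in>Y. f y = k" using v V by auto
  qed
  define F where "F = (\<lambda>(v, b). if b then (if v \<in> X then 2*m + f v else f v)
                                   else (if v \<in> X then f v else 5*m + 1 - f v))"
  define Xt where "Xt = X \<times> {False} \<union> Y \<times> {True}"
  define Yt where "Yt = Y \<times> {False} \<union> X \<times> {True}"
  have F1: "\<And>x. x \<in> X \<Longrightarrow> F (x, False) = f x" by (simp add: F_def)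
  have F2: "\<And>x. x \<in> X \<Longrightarrow> F (x, True) = 2*m + f x" by (simp add: F_def)
  have F3: "\<And>y. y \<in> Y \<Longrightarrow> F (y, False) = 5*m + 1 - f y" using disj by (auto simp: F_def)
  have F4: "\<And>y. y \<in> Y \<Longrightarrow> F (y, True) = f y" using disj by (auto simp: F_def)
  let ?V' = "prodK2_verts V"
  have V'eq: "?V' = Xt \<union> Yt" by (auto simp: prodK2_verts_def Xt_def Yt_def V)
  have finV': "finite ?V'" using finV by (simp add: prodK2_verts_def)
  have cV': "card ?V' = 4*m" using finV cV by (simp add: prodK2_verts_def card_cartesian_product)
  have imF: "F ` ?V' = {1..4*m}"
  proof
    show "F ` ?V' \<subseteq> {1..4*m}"
    proof
      fix k assume "k \<in> F ` ?V'"
      then obtain v b where vb: "v \<in> V" "k = F (v, b)" by (auto simp: prodK2_verts_def)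
      show "k \<in> {1..4*m}"
      proof (cases "v \<in> X")
        case True then show ?thesis using vb hX[OF True] by (cases b) (auto simp: F1 F2)
      next
        case False then have "v \<in> Y" using vb V by auto
        then show ?thesis using vb hY[OF \<open>v \<in> Y\<close>] by (cases b) (auto simp: F3 F4)
      qed
    qed
  next
    show "{1..4*m} \<subseteq> F ` ?V'"
    proof
      fix k assume k: "k \<in> {1..4*m}"
      have XV: "\<And>x b. x \<in> X \<Longrightarrow> (x, b) \<in> ?V'" and YV: "\<And>x b. x \<in> Y \<Longrightarrow> (x, b) \<in> ?V'"
        using V by (auto simp: prodK2_verts_def)
      consider "k \<le> m" | "m < k \<and> k \<le> 2*m" | "2*m < k \<and> k \<le> 3*m" | "3*m < k" by linarith
      then show "k \<in> F ` ?V'"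
      proof cases
        case 1
        then have "k \<in> f ` X" using k assms(7) by auto
        then obtain x where "x \<in> X" "f x = k" by auto
        then show ?thesis using F1 XV by (metis image_eqI)
      next
        case 2
        then obtain y where "y \<in> Y" "f y = k" using imY by (metis Suc_eq_plus1 Suc_leI)
        then show ?thesis using F4 YV by (metis image_eqI)
      next
        case 3
        then have "k - 2*m \<in> f ` X" using k assms(7) by auto
        then obtain x where "x \<in> X" "f x = k - 2*m" by auto
        then have "F (x, True) = k" using F2 3 by simp
        then show ?thesis using XV \<open>x \<in> X\<close> by (metis image_eqI)
      next
        case 4
        have "m + 1 \<le> 5*m + 1 - k" "5*m + 1 - k \<le> 2*m" using 4 k by auto
        then obtain y where "y \<in> Y" "f y = 5*m + 1 - k" using imY[of "5*m+1-k"] by blast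
        then have "F (y, False) = k" using F3 4 k by simp
        then show ?thesis using YV \<open>y \<in> Y\<close> by (metis image_eqI)
      qed
    qed
  qed
  have num: "numbering ?V' F"
    unfolding numbering_def bij_betw_def
    using imF cV' finV' by (simp add: eq_card_imp_inj_on)
  have edgeG: "\<And>u v. {u, v} \<in> E \<Longrightarrow> \<exists>x\<in>X. \<exists>y\<in>Y. {u, v} = {x, y}" using edG by blast
  have bip: "bipartition ?V' (prodK2_edges V E) Xt Yt"
    unfolding bipartition_def
  proof (intro conjI)
    show "Xt \<union> Yt = ?V'" using V'eq by simp
    show "Xt \<inter> Yt = {}" using disj by (auto simp: Xt_def Yt_def)
    show "\<forall>e\<in>prodK2_edges V E. \<exists>x\<in>Xt. \<exists>y\<in>Yt. e = {x, y}"
    proof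
      fix e assume "e \<in> prodK2_edges V E"
      then consider (h) u v b where "e = {(u, b), (v, b)}" "{u, v} \<in> E"
        | (v) w where "e = {(w, False), (w, True)}" "w \<in> V"
        unfolding prodK2_edges_def by blast
      then show "\<exists>x\<in>Xt. \<exists>y\<in>Yt. e = {x, y}"
      proof cases
        case h
        then obtain x y where xy: "x \<in> X" "y \<in> Y" "{u, v} = {x, y}" using edgeG by blast
        then have "e = {(x, b), (y, b)}" using h by (auto simp: doubleton_eq_iff)
        show ?thesis
        proof (cases b)
          case True
          have "(y, b) \<in> Xt" "(x, b) \<in> Yt" using xy True by (auto simp: Xt_def Yt_def)
          moreover have "e = {(y, b), (x, b)}" using \<open>e = {(x, b), (y, b)}\<close> by (simp add: insert_commute)
          ultimately show ?thesis by blast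
        next
          case False
          have "(x, b) \<in> Xt" "(y, b) \<in> Yt" using xy False by (auto simp: Xt_def Yt_def)
          then show ?thesis using \<open>e = {(x, b), (y, b)}\<close> by blast
        qed
      next
        case v
        then have "w \<in> X \<or> w \<in> Y" using V by auto
        then show ?thesis
        proof
          assume w: "w \<in> X"
          have "(w, False) \<in> Xt" "(w, True) \<in> Yt" using w by (auto simp: Xt_def Yt_def)
          then show ?thesis using v(1) by blast
        next
          assume w: "w \<in> Y"
          have "(w, True) \<in> Xt" "(w, False) \<in> Yt" using w by (auto simp: Xt_def Yt_def)
          moreover have "e = {(w, True), (w, False)}" using v(1) by (simp add: insert_commute)
          ultimately show ?thesis by blast
        qed
      qed
    qed
  qed
  have pre: "{w \<in> ?V'. F w \<in> {1..2*m}} = Xt"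
  proof
    show "{w \<in> ?V'. F w \<in> {1..2*m}} \<subseteq> Xt"
    proof
      fix w assume w: "w \<in> {w \<in> ?V'. F w \<in> {1..2*m}}"
      then have "w \<in> Xt \<union> Yt" using V'eq by simp
      moreover have "w \<notin> Yt"
      proof
        assume "w \<in> Yt"
        then show False
        proof (unfold Yt_def, elim UnE SigmaE)
          fix a b assume "a \<in> Y" "b \<in> {False}" "w = (a, b)"
          then show False using w F3 hY[of a] by auto
        next
          fix a b assume "a \<in> X" "b \<in> {True}" "w = (a, b)"
          then show False using w F2 hX[of a] by auto
        qed
      qed
      ultimately show "w \<in> Xt" by blast
    qed
    show "Xt \<subseteq> {w \<in> ?V'. F w \<in> {1..2*m}}"
    proof
      fix w assume w: "w \<in> Xt"
      then have wV: "w \<in> ?V'" using V'eq by blast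
      from w show "w \<in> {w \<in> ?V'. F w \<in> {1..2*m}}"
      proof (unfold Xt_def, elim UnE SigmaE)
        fix a b assume "a \<in> X" "b \<in> {False}" "w = (a, b)"
        then show ?thesis using wV F1 hX[of a] by auto
      next
        fix a b assume "a \<in> Y" "b \<in> {True}" "w = (a, b)"
        then show ?thesis using wV F4 hY[of a] by auto
      qed
    qed
  qed
  let ?S = "{F u + F v | u v. {u, v} \<in> prodK2_edges V E}"
  have bnd: "\<And>s. s \<in> ?S \<Longrightarrow> s \<le> 5*m + 1"
  proof -
    fix s assume "s \<in> ?S"
    then obtain p q where s: "s = F p + F q" "{p, q} \<in> prodK2_edges V E" by blast
    then consider (h) u v b where "{p, q} = {(u, b), (v, b)}" "{u, v} \<in> E"
        | (v) w where "{p, q} = {(w, False), (w, True)}" "w \<in> V"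
        unfolding prodK2_edges_def by blast
    then show "s \<le> 5*m + 1"
    proof cases
      case h
      then obtain x y where xy: "x \<in> X" "y \<in> Y" "{u, v} = {x, y}" using edgeG by blast
      then have "{p, q} = {(x, b), (y, b)}" using h by (auto simp: doubleton_eq_iff)
      then have "s = F (x, b) + F (y, b)" using s dsum by metis
      then show ?thesis using xy hX[of x] hY[of y] F1 F2 F3 F4 by (cases b) auto
    next
      case v
      then have "s = F (w, False) + F (w, True)" using s dsum by metis
      moreover have "w \<in> X \<or> w \<in> Y" using v V by auto
      ultimately show ?thesis using hX[of w] hY[of w] F1 F2 F3 F4 by auto
    qed
  qed
  obtain y0 where y0: "y0 \<in> Y" using assms(4,5) by fastforce
  have y0V: "y0 \<in> V" using y0 V by auto
  have "{(y0, False), (y0, True)} \<in> prodK2_edges V E"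
    using y0V unfolding prodK2_edges_def by blast
  then have memS: "F (y0, False) + F (y0, True) \<in> ?S" by blast
  have val: "F (y0, False) + F (y0, True) = 5*m + 1" using F3 F4 y0 hY[OF y0] by simp
  have "?S \<subseteq> {..5*m+1}" using bnd by blast
  then have finS: "finite ?S" using finite_subset by blast
  have str: "strength (prodK2_edges V E) F = 5*m + 1"
    unfolding strength_def
    using Max_eqI[OF finS bnd memS[unfolded val]] by simp
  show ?thesis
    by (rule exI[of _ F], rule exI[of _ Xt], rule exI[of _ Yt]) (intro conjI num bip pre str)
qed

end
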